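(* Let $(X,d,\preccurlyeq)$ be a preordered $s$-regular $b$-metric space, let $x_0\in X$, and let $\mathcal{F}=\{f_\alpha\}_{\alpha\in\mathcal{I}}$ ($\mathcal I$ nonempty) be a concordantly isotone family of self mappings of $X$ with $f_\alpha(x_0)\succcurlyeq x_0$ for all $\alpha\in\mathcal{I}$. Suppose that for every chain $C\in\mathcal{C}^*_1(x_0,\mathcal{F},\preccurlyeq)$ there exists $w\in X$ which is a common upper bound of the chains $f_\alpha(C)$, $\alpha\in\mathcal{I}$, and there exist $z\in X$ and $\beta\in\mathcal{I}$ such that for all $\alpha\in\mathcal{I}$ and all $i\in\mathbb{N}$, $f_\alpha(w)\succcurlyeq w\succcurlyeq f_\beta^i(z)$, and $d(f_\alpha^i(w),f_\beta^i(z))\to 0$ as $i\to\infty$ for all $\alpha\in\mathcal I$. Then the set $\mathrm{ComFix}(\mathcal{F})\cap O^*_X(x_0)$ is nonempty and contains a maximal element.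
   Context: A $b$-metric space with coefficient $s\ge 1$ is a nonempty set $X$ with $d:X\times X\to[0,\infty)$ such that for all $x,y,z$: $d(x,y)=0$ iff $x=y$; $d(x,y)=d(y,x)$; $d(x,y)\le s[d(x,z)+d(z,y)]$. A preorder is a reflexive transitive relation $\preccurlyeq$; $x\succcurlyeq y$ means $y\preccurlyeq x$; $x\prec y$ means $x\preccurlyeq y$ and $x\ne y$. A preordered $s$-regular $b$-metric space $(X,d,\preccurlyeq)$ is a $b$-metric space with coefficient $s$ with a preorder such that $x\preccurlyeq y\preccurlyeq z$ implies $\max\{d(x,y),d(y,z)\}\le s^2d(x,z)$. A chain is a subset any two elements of which are comparable. $f^i$ is the $i$-th iterate. A family $\mathcal{F}=\{f_\alpha\}_{\alpha\in\mathcal I}$ of self maps is concordantly isotone if for all $x,y\in X$, $x\prec y$ implies $f_\alpha(x)\preccurlyeq f_\beta(y)$ for all $\alpha,\beta\in\mathcal{I}$. $O^*_X(x_0)=\{x:x\succcurlyeq x_0\}$. $\mathcal{C}^*_1(\mathcal F,\preccurlyeq)$ is the set of chains $C\subset\bigcup_{\alpha}f_\alpha(X)$ such that $f_\alpha(x)\succcurlyeq x$ for all $x\in C,\alpha\in\mathcal I$, and for all $x,y\in C$, $x\prec y$ implies $f_\alpha(x)\preccurlyeq y$ for all $\alpha$. $\mathcal{C}^*_1(x_0,\mathcal F,\preccurlyeq)=\{C\in\mathcal C^*_1(\mathcal F,\preccurlyeq): C\subset O^*_X(x_0)\cap\bigcup_\alpha f_\alpha(O^*_X(x_0))\}$. $\mathrm{ComFix}(\mathcal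 F)=\{x: f_\alpha(x)=x\ \forall\alpha\}$. A common upper bound of the sets $f_\alpha(C)$ is $w$ with $f_\alpha(x)\preccurlyeq w$ for all $x\in C$, $\alpha\in\mathcal I$. A maximal element of $A$ is $w\in A$ with no $u\in A$ such that $w\prec u$. *)

theory Defs
  imports "HOL-Analysis.Analysis"
begin

text \<open>The underlying set X is the whole type 'a (nonempty by construction).\<close>

definition b_metric :: "('a \<Rightarrow> 'a \<Rightarrow> real) \<Rightarrow> real \<Rightarrow> bool" where
  "b_metric d s \<longleftrightarrow> s \<ge> 1 \<and>
     (\<forall>x y. d x y \<ge> 0) \<and>
     (\<forall>x y. d x y = 0 \<longleftrightarrow> x = y) \<and>
     (\<forall>x y. d x y = d y x) \<and>
     (\<forall>x y z. d x y \<le> s * (d x z + d z y))"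

definition is_preorder :: "('a \<Rightarrow> 'a \<Rightarrow> bool) \<Rightarrow> bool" where
  "is_preorder le \<longleftrightarrow> reflp le \<and> transp le"

definition strict_of :: "('a \<Rightarrow> 'a \<Rightarrow> bool) \<Rightarrow> 'a \<Rightarrow> 'a \<Rightarrow> bool" where
  "strict_of le x y \<longleftrightarrow> le x y \<and> x \<noteq> y"

definition preordered_s_regular_b_metric ::
    "('a \<Rightarrow> 'a \<Rightarrow> real) \<Rightarrow> real \<Rightarrow> ('a \<Rightarrow> 'a \<Rightarrow> bool) \<Rightarrow> bool" where
  "preordered_s_regular_b_metric d s le \<longleftrightarrow> b_metric d s \<and> is_preorder le \<and>
     (\<forall>x y z. le x y \<and> le y z \<longrightarrow> max (d x y) (d y z) \<le> s\<^sup>2 * d x z)"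

definition is_chain :: "('a \<Rightarrow> 'a \<Rightarrow> bool) \<Rightarrow> 'a set \<Rightarrow> bool" where
  "is_chain le C \<longleftrightarrow> (\<forall>x\<in>C. \<forall>y\<in>C. le x y \<or> le y x)"

definition concordantly_isotone ::
    "('a \<Rightarrow> 'a \<Rightarrow> bool) \<Rightarrow> 'i set \<Rightarrow> ('i \<Rightarrow> 'a \<Rightarrow> 'a) \<Rightarrow> bool" where
  "concordantly_isotone le I f \<longleftrightarrow>
     (\<forall>x y. strict_of le x y \<longrightarrow> (\<forall>\<alpha>\<in>I. \<forall>\<beta>\<in>I. le (f \<alpha> x) (f \<beta> y)))"

definition upper_orbit :: "('a \<Rightarrow> 'a \<Rightarrow> bool) \<Rightarrow> 'a \<Rightarrow> 'a set" where
  "upper_orbit le x0 = {x. le x0 x}"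

definition C1star :: "('a \<Rightarrow> 'a \<Rightarrow> bool) \<Rightarrow> 'i set \<Rightarrow> ('i \<Rightarrow> 'a \<Rightarrow> 'a) \<Rightarrow> 'a set set" where
  "C1star le I f = {C. is_chain le C \<and> C \<subseteq> (\<Union>\<alpha>\<in>I. range (f \<alpha>)) \<and>
       (\<forall>x\<in>C. \<forall>\<alpha>\<in>I. le x (f \<alpha> x)) \<and>
       (\<forall>x\<in>C. \<forall>y\<in>C. strict_of le x y \<longrightarrow> (\<forall>\<alpha>\<in>I. le (f \<alpha> x) y))}"

definition C1star_at ::
    "'a \<Rightarrow> ('a \<Rightarrow> 'a \<Rightarrow> bool) \<Rightarrow> 'i set \<Rightarrow> ('i \<Rightarrow> 'a \<Rightarrow> 'a) \<Rightarrow> 'a set set" where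
  "C1star_at x0 le I f = {C \<in> C1star le I f.
      C \<subseteq> upper_orbit le x0 \<inter> (\<Union>\<alpha>\<in>I. f \<alpha> ` upper_orbit le x0)}"

definition ComFix :: "'i set \<Rightarrow> ('i \<Rightarrow> 'a \<Rightarrow> 'a) \<Rightarrow> 'a set" where
  "ComFix I f = {x. \<forall>\<alpha>\<in>I. f \<alpha> x = x}"

definition maximal_in :: "('a \<Rightarrow> 'a \<Rightarrow> bool) \<Rightarrow> 'a \<Rightarrow> 'a set \<Rightarrow> bool" where
  "maximal_in le w A \<longleftrightarrow> w \<in> A \<and> \<not> (\<exists>u\<in>A. strict_of le w u)"

end

theory Submission
  imports Defs
begin

lemma fix_lemma:
  assumes space: "preordered_s_regular_b_metric d s le"
    and iso: "concordantly_isotone le I f"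
    and a: "\<alpha> \<in> I"
    and w1: "le w (f \<alpha> w)"
    and zw: "\<forall>i::nat. i \<ge> 1 \<longrightarrow> le ((f \<beta> ^^ i) z) w"
    and lim: "(\<lambda>i. d ((f \<alpha> ^^ i) w) ((f \<beta> ^^ i) z)) \<longlonglongrightarrow> 0"
  shows "f \<alpha> w = w"
proof -
  have refl: "\<And>x. le x x" and tr: "\<And>x y z. le x y \<Longrightarrow> le y z \<Longrightarrow> le x z"
    using space unfolding preordered_s_regular_b_metric_def is_preorder_def
    by (auto simp: reflp_def dest: transpD)
  have reg: "\<And>x y z. le x y \<Longrightarrow> le y z \<Longrightarrow> max (d x y) (d y z) \<le> s\<^sup>2 * d x z"
    using space unfolding preordered_s_regular_b_metric_def by blast
  have bm: "b_metric d s" using space unfolding preordered_s_regular_b_metric_def by blast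
  have sym: "\<And>x y. d x y = d y x" and d0: "\<And>x y. d x y = 0 \<longleftrightarrow> x = y"
    and s1: "s \<ge> 1"
    using bm unfolding b_metric_def by auto
  have step: "le ((f \<alpha> ^^ i) w) ((f \<alpha> ^^ Suc i) w)" for i
  proof (induction i)
    case 0 then show ?case using w1 by simp
  next
    case (Suc i)
    show ?case
    proof (cases "(f \<alpha> ^^ i) w = (f \<alpha> ^^ Suc i) w")
      case True
      then show ?thesis using refl by simp
    next
      case False
      then have "strict_of le ((f \<alpha> ^^ i) w) ((f \<alpha> ^^ Suc i) w)"
        using Suc by (simp add: strict_of_def)
      then show ?thesis using iso a unfolding concordantly_isotone_def by simp
    qed
  qed
  have up: "le (f \<alpha> w) ((f \<alpha> ^^ Suc i) w)" for i
  proof (induction i)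
    case 0 then show ?case using refl by simp
  next
    case (Suc i) then show ?case using step[of "Suc i"] tr by blast
  qed
  have up0: "le w ((f \<alpha> ^^ Suc i) w)" for i using up[of i] w1 tr by blast
  have s2: "s\<^sup>2 \<ge> 0" by simp
  have bound: "d w (f \<alpha> w) \<le> (s\<^sup>2 * s\<^sup>2) * d ((f \<alpha> ^^ i) w) ((f \<beta> ^^ i) z)" if i1: "i \<ge> 1" for i
  proof -
    obtain j where j: "i = Suc j" using i1 by (cases i) auto
    have A: "d w (f \<alpha> w) \<le> s\<^sup>2 * d w ((f \<alpha> ^^ i) w)"
      using reg[OF w1 up[of j]] j by simp
    have B: "d w ((f \<alpha> ^^ i) w) \<le> s\<^sup>2 * d ((f \<beta> ^^ i) z) ((f \<alpha> ^^ i) w)"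
      using reg[OF zw[rule_format, OF i1] up0[of j]] j by simp
    have "s\<^sup>2 * d w ((f \<alpha> ^^ i) w) \<le> s\<^sup>2 * (s\<^sup>2 * d ((f \<beta> ^^ i) z) ((f \<alpha> ^^ i) w))"
      using B s2 by (rule mult_left_mono)
    then show ?thesis using A sym[of "(f \<beta> ^^ i) z"] by (simp add: mult.assoc)
  qed
  have lim2: "(\<lambda>i. (s\<^sup>2 * s\<^sup>2) * d ((f \<alpha> ^^ i) w) ((f \<beta> ^^ i) z)) \<longlonglongrightarrow> (s\<^sup>2 * s\<^sup>2) * 0"
    by (intro tendsto_mult tendsto_const lim)
  have "d w (f \<alpha> w) \<le> 0"
    using LIMSEQ_le_const[OF lim2, of "d w (f \<alpha> w)"] bound by auto
  moreover have "d w (f \<alpha> w) \<ge> 0" using bm unfolding b_metric_def by auto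
  ultimately show ?thesis using d0 by (metis antisym)
qed

theorem theorem3p2:
  fixes d :: "'a \<Rightarrow> 'a \<Rightarrow> real" and s :: real and le :: "'a \<Rightarrow> 'a \<Rightarrow> bool"
    and x0 :: 'a and I :: "'i set" and f :: "'i \<Rightarrow> 'a \<Rightarrow> 'a"
  assumes space: "preordered_s_regular_b_metric d s le"
    and I_ne: "I \<noteq> {}"
    and iso: "concordantly_isotone le I f"
    and x0: "\<forall>\<alpha>\<in>I. le x0 (f \<alpha> x0)"
    and chains: "\<forall>C \<in> C1star_at x0 le I f. \<exists>w.
        (\<forall>\<alpha>\<in>I. \<forall>x\<in>C. le (f \<alpha> x) w) \<and>
        (\<exists>z. \<exists>\<beta>\<in>I.
           (\<forall>\<alpha>\<in>I. \<forall>i::nat. i \<ge> 1 \<longrightarrow> le w (f \<alpha> w) \<and> le ((f \<beta> ^^ i) z) w) \<and>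
           (\<forall>\<alpha>\<in>I. (\<lambda>i. d ((f \<alpha> ^^ i) w) ((f \<beta> ^^ i) z)) \<longlonglongrightarrow> 0))"
  shows "ComFix I f \<inter> upper_orbit le x0 \<noteq> {} \<and>
         (\<exists>w. maximal_in le w (ComFix I f \<inter> upper_orbit le x0))"
proof -
  have refl: "\<And>x. le x x" and tr: "\<And>x y z. le x y \<Longrightarrow> le y z \<Longrightarrow> le x z"
    using space unfolding preordered_s_regular_b_metric_def is_preorder_def
    by (auto simp: reflp_def dest: transpD)
  have reg: "\<And>x y z. le x y \<Longrightarrow> le y z \<Longrightarrow> max (d x y) (d y z) \<le> s\<^sup>2 * d x z"
    using space unfolding preordered_s_regular_b_metric_def by blast
  have bm: "b_metric d s" using space unfolding preordered_s_regular_b_metric_def by blast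
  have d0: "\<And>x y. d x y = 0 \<longleftrightarrow> x = y" using bm unfolding b_metric_def by auto
  have antis: "x = y" if "le x y" "le y x" for x y
  proof -
    have "d x y \<le> s\<^sup>2 * d x x" using reg[OF that] by simp
    moreover have "d x y \<ge> 0" using bm unfolding b_metric_def by auto
    ultimately show ?thesis using d0 by (metis antisym mult_zero_right)
  qed
  let ?A = "ComFix I f \<inter> upper_orbit le x0"
  have key: "\<exists>w. w \<in> ComFix I f \<and> (\<forall>\<alpha>\<in>I. \<forall>x\<in>C. le (f \<alpha> x) w)" if C: "C \<in> C1star_at x0 le I f" for C
  proof -
    obtain w z \<beta> where ub: "\<forall>\<alpha>\<in>I. \<forall>x\<in>C. le (f \<alpha> x) w" and b: "\<beta> \<in> I"
      and h: "\<forall>\<alpha>\<in>I. \<forall>i::nat. i \<ge> 1 \<longrightarrow> le w (f \<alpha> w) \<and> le ((f \<beta> ^^ i) z) w"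
      and l: "\<forall>\<alpha>\<in>I. (\<lambda>i. d ((f \<alpha> ^^ i) w) ((f \<beta> ^^ i) z)) \<longlonglongrightarrow> 0"
      using chains C by blast
    have "f \<alpha> w = w" if a: "\<alpha> \<in> I" for \<alpha>
    proof (rule fix_lemma[OF space iso a])
      show "le w (f \<alpha> w)" using h a by auto
      show "\<forall>i::nat. i \<ge> 1 \<longrightarrow> le ((f \<beta> ^^ i) z) w" using h a by auto
      show "(\<lambda>i. d ((f \<alpha> ^^ i) w) ((f \<beta> ^^ i) z)) \<longlonglongrightarrow> 0" using l a by auto
    qed
    then show ?thesis using ub by (auto simp: ComFix_def)
  qed
  obtain \<gamma> where g: "\<gamma> \<in> I" using I_ne by blast
  have Cs: "{f \<gamma> x0} \<in> C1star_at x0 le I f"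
  proof -
    have "le (f \<gamma> x0) (f \<alpha> (f \<gamma> x0))" if a: "\<alpha> \<in> I" for \<alpha>
    proof (cases "x0 = f \<gamma> x0")
      case True then show ?thesis using x0 a by metis
    next
      case False
      then have "strict_of le x0 (f \<gamma> x0)" using x0 g by (simp add: strict_of_def)
      then show ?thesis using iso a g unfolding concordantly_isotone_def by blast
    qed
    moreover have "\<exists>\<alpha>\<in>I. f \<gamma> x0 \<in> f \<alpha> ` upper_orbit le x0"
      using refl g unfolding upper_orbit_def by blast
    ultimately show ?thesis using g x0 refl
      unfolding C1star_at_def C1star_def is_chain_def upper_orbit_def strict_of_def by auto
  qed
  obtain p where p: "p \<in> ComFix I f" "le (f \<gamma> (f \<gamma> x0)) p" using key[OF Cs] g by blast
  have "le (f \<gamma> x0) (f \<gamma> (f \<gamma> x0))" using Cs g unfolding C1star_at_def C1star_def by blast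
  then have pA: "p \<in> ?A" using p x0 g tr unfolding upper_orbit_def by blast
  have "\<exists>m \<in> ?A. \<forall>a \<in> ?A. le m a \<longrightarrow> a = m"
  proof (rule predicate_Zorn)
    show "partial_order_on ?A (relation_of le ?A)"
      unfolding partial_order_on_def preorder_on_def refl_on_def trans_def antisym_def relation_of_def
      using refl tr antis by blast
  next
    fix D assume D: "D \<in> Chains (relation_of le ?A)"
    then have DA: "D \<subseteq> ?A" unfolding Chains_def relation_of_def by blast
    have Dch: "\<forall>a\<in>D. \<forall>b\<in>D. le a b \<or> le b a" using D unfolding Chains_def relation_of_def by blast
    show "\<exists>u \<in> ?A. \<forall>a \<in> D. le a u"
    proof (cases "D = {}")
      case True then show ?thesis using pA by blast
    next
      case False
      then obtain e where e: "e \<in> D" by blast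
      have fx: "\<And>x \<alpha>. x \<in> D \<Longrightarrow> \<alpha> \<in> I \<Longrightarrow> f \<alpha> x = x" using DA unfolding ComFix_def by blast
      have "D \<in> C1star_at x0 le I f"
        unfolding C1star_at_def C1star_def is_chain_def
      proof (intro CollectI conjI ballI impI subsetI)
        show "\<And>x y. x \<in> D \<Longrightarrow> y \<in> D \<Longrightarrow> le x y \<or> le y x" using Dch by blast
        show "\<And>x. x \<in> D \<Longrightarrow> x \<in> (\<Union>\<alpha>\<in>I. range (f \<alpha>))"
          using fx g by (metis UN_I rangeI)
        show "\<And>x \<alpha>. x \<in> D \<Longrightarrow> \<alpha> \<in> I \<Longrightarrow> le x (f \<alpha> x)" using fx refl by metis
        show "\<And>x y \<alpha>. x \<in> D \<Longrightarrow> y \<in> D \<Longrightarrow> strict_of le x y \<Longrightarrow> \<alpha> \<in> I \<Longrightarrow> le (f \<alpha> x) y"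
          using fx by (metis strict_of_def)
        show "\<And>x. x \<in> D \<Longrightarrow> x \<in> upper_orbit le x0 \<inter> (\<Union>\<alpha>\<in>I. f \<alpha> ` upper_orbit le x0)"
        proof -
          fix x assume x: "x \<in> D"
          then have xo: "x \<in> upper_orbit le x0" using DA by blast
          have "x \<in> f \<gamma> ` upper_orbit le x0" using fx[OF x g] xo by (metis imageI)
          then show "x \<in> upper_orbit le x0 \<inter> (\<Union>\<alpha>\<in>I. f \<alpha> ` upper_orbit le x0)" using xo g by blast
        qed
      qed
      then obtain u where u: "u \<in> ComFix I f" "\<forall>\<alpha>\<in>I. \<forall>x\<in>D. le (f \<alpha> x) u" using key by blast
      have ub: "\<forall>a\<in>D. le a u" using u(2) fx g by metis
      have "le x0 u" using DA e ub tr unfolding upper_orbit_def by blast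
      then have "u \<in> ?A" using u(1) unfolding upper_orbit_def by blast
      then show ?thesis using ub by blast
    qed
  qed
  then obtain m where m: "m \<in> ?A" "\<forall>a \<in> ?A. le m a \<longrightarrow> a = m" by blast
  have "maximal_in le m ?A" using m unfolding maximal_in_def strict_of_def by blast
  then show ?thesis using pA by blast
qed

end
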